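(* Let $m\ge n\ge k$ be positive integers, $A\in\mathbb{R}^{m\times n}$ with $A^TA=I_n$, $x^*\in\mathbb{R}^n$ with support $S^*$, $|S^*|\le k$, and $y=Ax^*$. Then for every initialization $\mathcal{X}^0$, every $\eta>0$ and every $t\in\mathbb{N}$, the SEA iterates satisfy $\eta A^T(Ax^t-y)=u^t$.
   Context: $S^*=\{i:x^*_i\neq0\}$. For $v\in\mathbb{R}^n$, $\mathrm{largest}_k(v)$ is the set of indices of the $k$ entries of $v$ with largest absolute value (ties broken by selecting the highest indices). For $S\subseteq\{1,\dots,n\}$, $A_S$ is the submatrix of columns indexed by $S$, $v_S$ the restriction of a vector to $S$, $A_S^\dagger$ the Moore–Penrose pseudoinverse of $A_S$. SEA with initialization $\mathcal{X}^0$ and step size $\eta$ generates, for $t=0,1,2,\dots$: $S^t=\mathrm{largest}_k(\mathcal{X}^t)$; $x^t_i=0$ for $i\notin S^t$ and $x^t_{S^t}=A_{S^t}^\dagger y$; $\mathcal{X}^{t+1}=\mathcal{X}^t-\eta A^T(Ax^t-y)$. The oracle direction is $u^t_i=-\eta x^*_i$ if $i\in S^*\setminus S^t$ and $u^t_i=0$ otherwise. *)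

theory Defs
  imports "Jordan_Normal_Form.Matrix"
begin

text \<open>Vectors in R^n are JNF vectors of dimension n (indices 0..<n), matrices are JNF
matrices. Indices are natural numbers, so "highest index" refers to the usual order.\<close>

definition support_vec :: "real vec \<Rightarrow> nat set" where
  "support_vec v = {i. i < dim_vec v \<and> v $ i \<noteq> 0}"

definition largest_k :: "nat \<Rightarrow> real vec \<Rightarrow> nat set" where
  "largest_k k v = {i. i < dim_vec v \<and>
     card {j. j < dim_vec v \<and> (\<bar>v $ j\<bar> > \<bar>v $ i\<bar> \<or> (\<bar>v $ j\<bar> = \<bar>v $ i\<bar> \<and> j > i))} < k}"

definition col_submat :: "real mat \<Rightarrow> nat set \<Rightarrow> real mat" where
  "col_submat A S = mat (dim_row A) (card S) (\<lambda>(i,j). A $$ (i, sorted_list_of_set S ! j))"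

definition pinv :: "real mat \<Rightarrow> real mat" where
  "pinv M = (THE X. X \<in> carrier_mat (dim_col M) (dim_row M) \<and>
      M * X * M = M \<and> X * M * X = X \<and>
      transpose_mat (M * X) = M * X \<and> transpose_mat (X * M) = X * M)"

definition embed_vec :: "nat \<Rightarrow> nat set \<Rightarrow> real vec \<Rightarrow> real vec" where
  "embed_vec n S z = vec n (\<lambda>i. if i \<in> S then z $ card {j \<in> S. j < i} else 0)"

definition sea_S :: "nat \<Rightarrow> real vec \<Rightarrow> nat set" where
  "sea_S k X = largest_k k X"

definition sea_x :: "real mat \<Rightarrow> real vec \<Rightarrow> nat \<Rightarrow> real vec \<Rightarrow> real vec" where
  "sea_x A y k X = embed_vec (dim_col A) (sea_S k X) (pinv (col_submat A (sea_S k X)) *\<^sub>v y)"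

primrec sea_X :: "real mat \<Rightarrow> real vec \<Rightarrow> nat \<Rightarrow> real \<Rightarrow> real vec \<Rightarrow> nat \<Rightarrow> real vec" where
  "sea_X A y k \<eta> X0 0 = X0"
| "sea_X A y k \<eta> X0 (Suc t) =
     sea_X A y k \<eta> X0 t - \<eta> \<cdot>\<^sub>v (transpose_mat A *\<^sub>v (A *\<^sub>v sea_x A y k (sea_X A y k \<eta> X0 t) - y))"

definition sea_St :: "real mat \<Rightarrow> real vec \<Rightarrow> nat \<Rightarrow> real \<Rightarrow> real vec \<Rightarrow> nat \<Rightarrow> nat set" where
  "sea_St A y k \<eta> X0 t = sea_S k (sea_X A y k \<eta> X0 t)"

definition sea_xt :: "real mat \<Rightarrow> real vec \<Rightarrow> nat \<Rightarrow> real \<Rightarrow> real vec \<Rightarrow> nat \<Rightarrow> real vec" where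
  "sea_xt A y k \<eta> X0 t = sea_x A y k (sea_X A y k \<eta> X0 t)"

definition oracle_u :: "real mat \<Rightarrow> real vec \<Rightarrow> real vec \<Rightarrow> nat \<Rightarrow> real \<Rightarrow> real vec \<Rightarrow> nat \<Rightarrow> real vec" where
  "oracle_u A y xs k \<eta> X0 t = vec (dim_vec xs)
     (\<lambda>i. if i \<in> support_vec xs - sea_St A y k \<eta> X0 t then - \<eta> * xs $ i else 0)"

end

theory Submission
  imports Defs
begin

lemma card_less_sorted:
  fixes S :: "nat set"
  assumes "finite S" "p < card S"
  shows "card {j \<in> S. j < sorted_list_of_set S ! p} = p"
proof -
  let ?L = "sorted_list_of_set S"
  have sw: "sorted_wrt (<) ?L" by simp
  have len: "length ?L = card S" by simp
  have dist: "distinct ?L" by simp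
  have st: "set ?L = S" using assms by simp
  have lt: "\<And>q. q < card S \<Longrightarrow> (?L ! q < ?L ! p) = (q < p)"
    using sw len assms(2) by (metis sorted_wrt_nth_less nat_neq_iff order_less_asym)
  have "{j \<in> S. j < ?L ! p} = (\<lambda>q. ?L ! q) ` {..<p}"
  proof
    show "{j \<in> S. j < ?L ! p} \<subseteq> (\<lambda>q. ?L ! q) ` {..<p}"
    proof
      fix j assume "j \<in> {j \<in> S. j < ?L ! p}"
      then obtain q where q: "q < card S" "j = ?L ! q" "j < ?L ! p"
        using st len by (metis (no_types, lifting) in_set_conv_nth mem_Collect_eq)
      then show "j \<in> (\<lambda>q. ?L ! q) ` {..<p}" using lt by auto
    qed
    show "(\<lambda>q. ?L ! q) ` {..<p} \<subseteq> {j \<in> S. j < ?L ! p}"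
    proof
      fix j assume "j \<in> (\<lambda>q. ?L ! q) ` {..<p}"
      then obtain q where q: "q < p" "j = ?L ! q" by auto
      then have "q < card S" using assms(2) by simp
      then show "j \<in> {j \<in> S. j < ?L ! p}" using q lt st len by (metis (mono_tags, lifting) mem_Collect_eq nth_mem)
    qed
  qed
  moreover have "inj_on (\<lambda>q. ?L ! q) {..<p}"
    using dist len assms(2) by (auto simp: inj_on_def nth_eq_iff_index_eq)
  ultimately show ?thesis by (simp add: card_image)
qed

lemma pinv_orth:
  fixes B :: "real mat"
  assumes B: "B \<in> carrier_mat r s" and o: "transpose_mat B * B = 1\<^sub>m s"
  shows "pinv B = transpose_mat B"
  unfolding pinv_def
proof (rule the_equality)
  have Bt: "transpose_mat B \<in> carrier_mat s r" using B by simp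
  have c1: "B * transpose_mat B * B = B"
    using assoc_mult_mat[OF B Bt B] o right_mult_one_mat[OF B] by simp
  have c2: "transpose_mat B * B * transpose_mat B = transpose_mat B"
    using o left_mult_one_mat[OF Bt] by simp
  have c3: "transpose_mat (B * transpose_mat B) = B * transpose_mat B"
    using transpose_mult[OF B Bt] by simp
  have c4: "transpose_mat (transpose_mat B * B) = transpose_mat B * B"
    using o by simp
  show "transpose_mat B \<in> carrier_mat (dim_col B) (dim_row B) \<and>
    B * transpose_mat B * B = B \<and> transpose_mat B * B * transpose_mat B = transpose_mat B \<and>
    transpose_mat (B * transpose_mat B) = B * transpose_mat B \<and>
    transpose_mat (transpose_mat B * B) = transpose_mat B * B"
    using B Bt c1 c2 c3 c4 by simp
  fix X assume X: "X \<in> carrier_mat (dim_col B) (dim_row B) \<and>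
      B * X * B = B \<and> X * B * X = X \<and>
      transpose_mat (B * X) = B * X \<and> transpose_mat (X * B) = X * B"
  have Xc: "X \<in> carrier_mat s r" using X B by auto
  have 1: "B * X * B = B" and 3: "transpose_mat (B * X) = B * X" using X by auto
  have BX: "B * X \<in> carrier_mat r r" using B Xc by simp
  have Xt: "transpose_mat X \<in> carrier_mat r s" using Xc by simp
  have XBc: "X * B \<in> carrier_mat s s" using B Xc by simp
  have XB: "X * B = 1\<^sub>m s"
  proof -
    have "transpose_mat B * B = transpose_mat B * (B * X * B)" by (simp only: 1)
    also have "\<dots> = transpose_mat B * (B * (X * B))" by (simp only: assoc_mult_mat[OF B Xc B])
    also have "\<dots> = (transpose_mat B * B) * (X * B)" by (simp only: assoc_mult_mat[OF Bt B XBc])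
    also have "\<dots> = X * B" using o left_mult_one_mat[OF XBc] by simp
    finally show ?thesis using o by simp
  qed
  have "X = 1\<^sub>m s * X" using left_mult_one_mat[OF Xc] by simp
  also have "\<dots> = (transpose_mat B * B) * X" using o by simp
  also have "\<dots> = transpose_mat B * (B * X)" by (rule assoc_mult_mat[OF Bt B Xc])
  also have "\<dots> = transpose_mat B * transpose_mat (B * X)" by (simp only: 3)
  also have "\<dots> = transpose_mat B * (transpose_mat X * transpose_mat B)"
    by (simp only: transpose_mult[OF B Xc])
  also have "\<dots> = (transpose_mat B * transpose_mat X) * transpose_mat B"
    using assoc_mult_mat[OF Bt Xt Bt] by simp
  also have "\<dots> = transpose_mat (X * B) * transpose_mat B"
    by (simp only: transpose_mult[OF Xc B])
  also have "\<dots> = transpose_mat B" using XB left_mult_one_mat[OF Bt] by simp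
  finally show "X = transpose_mat B" .
qed

lemma sea_X_carrier:
  assumes "A \<in> carrier_mat m n" "X0 \<in> carrier_vec n"
  shows "sea_X A y k \<eta> X0 t \<in> carrier_vec n"
proof (induction t)
  case 0 then show ?case using assms(2) by simp
next
  case (Suc t)
  have "dim_vec (transpose_mat A *\<^sub>v (A *\<^sub>v sea_x A y k (sea_X A y k \<eta> X0 t) - y)) = n"
    using assms(1) by (simp only: dim_mult_mat_vec index_transpose_mat carrier_matD)
  then have "\<eta> \<cdot>\<^sub>v (transpose_mat A *\<^sub>v (A *\<^sub>v sea_x A y k (sea_X A y k \<eta> X0 t) - y)) \<in> carrier_vec n"
    by (simp only: smult_carrier_vec carrier_vec_def mem_Collect_eq index_smult_vec)
  then show ?case using Suc by (simp only: sea_X.simps minus_carrier_vec)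
qed

lemma sea_x_restrict:
  fixes A :: "real mat" and xs X :: "real vec"
  assumes A: "A \<in> carrier_mat m n" and o: "transpose_mat A * A = 1\<^sub>m n"
    and xs: "xs \<in> carrier_vec n" and X: "X \<in> carrier_vec n"
  shows "sea_x A (A *\<^sub>v xs) k X = vec n (\<lambda>i. if i \<in> sea_S k X then xs $ i else 0)"
proof -
  define S where "S = sea_S k X"
  have Sn: "S \<subseteq> {..<n}" using X by (auto simp: S_def sea_S_def largest_k_def)
  hence fin: "finite S" using finite_subset by blast
  define c where "c = card S"
  define L where "L = sorted_list_of_set S"
  have len: "length L = c" unfolding L_def c_def by simp
  have setL: "set L = S" unfolding L_def using fin by simp
  have dist: "distinct L" unfolding L_def by simp
  have Ln: "\<And>j. j < c \<Longrightarrow> L ! j < n" using Sn setL len by (metis lessThan_iff nth_mem subsetD)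
  define P :: "real mat" where "P = mat n c (\<lambda>(i,j). if i = L ! j then 1 else 0)"
  have P: "P \<in> carrier_mat n c" unfolding P_def by simp
  have sumd: "\<And>f :: nat \<Rightarrow> real. \<And>a. a < n \<Longrightarrow> (\<Sum>l\<in>{0..<n}. f l * (if l = a then 1 else 0)) = f a"
    by (simp add: if_distrib[of "\<lambda>z. _ * z"] cong: if_cong)
  have BAP: "col_submat A S = A * P"
  proof (rule eq_matI)
    fix i j assume ij: "i < dim_row (A * P)" "j < dim_col (A * P)"
    hence i: "i < m" and j: "j < c" using A P by auto
    have "(A * P) $$ (i,j) = (\<Sum>l\<in>{0..<n}. A $$ (i,l) * (if l = L ! j then 1 else 0))"
      using A P i j by (simp add: scalar_prod_def P_def)
    also have "\<dots> = A $$ (i, L ! j)" by (rule sumd[OF Ln[OF j]])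
    finally show "col_submat A S $$ (i, j) = (A * P) $$ (i, j)"
      using i j A by (simp add: col_submat_def L_def c_def)
  qed (use A P in \<open>auto simp: col_submat_def c_def\<close>)
  have PP: "transpose_mat P * P = 1\<^sub>m c"
  proof (rule eq_matI)
    fix i j assume ij: "i < dim_row (1\<^sub>m c)" "j < dim_col (1\<^sub>m c)"
    hence i: "i < c" and j: "j < c" by auto
    have "(transpose_mat P * P) $$ (i,j) = (\<Sum>l\<in>{0..<n}. (if l = L ! i then 1 else 0) * (if l = L ! j then 1 else 0))"
      using P i j by (simp add: scalar_prod_def P_def)
    also have "\<dots> = (if L ! j = L ! i then 1 else 0)" using sumd[of "L ! j"] Ln j by simp
    also have "\<dots> = 1\<^sub>m c $$ (i,j)" using dist i j len by (simp add: nth_eq_iff_index_eq)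
    finally show "(transpose_mat P * P) $$ (i,j) = 1\<^sub>m c $$ (i,j)" .
  qed (use P in auto)
  define B where "B = col_submat A S"
  have B: "B \<in> carrier_mat m c" using A P BAP B_def by simp
  have BB: "transpose_mat B * B = 1\<^sub>m c"
  proof -
    have "transpose_mat B * B = (transpose_mat P * transpose_mat A) * (A * P)"
      using BAP B_def A P by (simp add: transpose_mult)
    also have "\<dots> = transpose_mat P * ((transpose_mat A * A) * P)"
    proof -
      have Pt: "transpose_mat P \<in> carrier_mat c n" using P by simp
      have At: "transpose_mat A \<in> carrier_mat n m" using A by simp
      have AP: "A * P \<in> carrier_mat m c" using A P by simp
      show ?thesis
        by (simp only: assoc_mult_mat[OF Pt At AP] assoc_mult_mat[OF At A P])
    qed
    also have "\<dots> = 1\<^sub>m c" using o P PP by simp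
    finally show ?thesis .
  qed
  have pB: "pinv B = transpose_mat B" by (rule pinv_orth[OF B BB])
  have z: "pinv B *\<^sub>v (A *\<^sub>v xs) = transpose_mat P *\<^sub>v xs"
  proof -
    have "pinv B *\<^sub>v (A *\<^sub>v xs) = (transpose_mat P * transpose_mat A) *\<^sub>v (A *\<^sub>v xs)"
      using pB BAP B_def A P by (simp add: transpose_mult)
    also have "\<dots> = transpose_mat P *\<^sub>v ((transpose_mat A * A) *\<^sub>v xs)"
    proof -
      have Pt: "transpose_mat P \<in> carrier_mat c n" using P by simp
      have At: "transpose_mat A \<in> carrier_mat n m" using A by simp
      have Ax: "A *\<^sub>v xs \<in> carrier_vec m" using A xs by simp
      show ?thesis
        by (simp only: assoc_mult_mat_vec[OF Pt At Ax] assoc_mult_mat_vec[OF At A xs])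
    qed
    also have "\<dots> = transpose_mat P *\<^sub>v xs" using o xs by simp
    finally show ?thesis .
  qed
  have zj: "\<And>j. j < c \<Longrightarrow> (transpose_mat P *\<^sub>v xs) $ j = xs $ (L ! j)"
  proof -
    fix j assume j: "j < c"
    have "(transpose_mat P *\<^sub>v xs) $ j = (\<Sum>l\<in>{0..<n}. xs $ l * (if l = L ! j then 1 else 0))"
      using P j xs by (simp add: scalar_prod_def P_def mult_ac)
    also have "\<dots> = xs $ (L ! j)" by (rule sumd[OF Ln[OF j]])
    finally show "(transpose_mat P *\<^sub>v xs) $ j = xs $ (L ! j)" .
  qed
  have "sea_x A (A *\<^sub>v xs) k X = embed_vec n S (transpose_mat P *\<^sub>v xs)"
    unfolding sea_x_def using z A by (simp add: S_def B_def)
  also have "\<dots> = vec n (\<lambda>i. if i \<in> S then xs $ i else 0)"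
  proof (rule eq_vecI)
    fix i assume "i < dim_vec (vec n (\<lambda>i. if i \<in> S then xs $ i else 0))"
    hence i: "i < n" by simp
    show "embed_vec n S (transpose_mat P *\<^sub>v xs) $ i = vec n (\<lambda>i. if i \<in> S then xs $ i else 0) $ i"
    proof (cases "i \<in> S")
      case True
      then obtain p where p: "p < c" "i = L ! p" using setL len by (metis in_set_conv_nth)
      have "card {j \<in> S. j < i} = p" using card_less_sorted[OF fin, of p] p by (simp add: L_def c_def)
      then show ?thesis using True i zj p by (simp add: embed_vec_def)
    qed (simp add: embed_vec_def i)
  qed (simp add: embed_vec_def)
  finally show ?thesis by (simp add: S_def)
qed

theorem lemmaC8:
  fixes m n k :: nat and A :: "real mat" and xs y X0 :: "real vec" and \<eta> :: real
  assumes "0 < k" "k \<le> n" "n \<le> m"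
    and "A \<in> carrier_mat m n"
    and "transpose_mat A * A = 1\<^sub>m n"
    and "xs \<in> carrier_vec n"
    and "card (support_vec xs) \<le> k"
    and "y = A *\<^sub>v xs"
    and "X0 \<in> carrier_vec n"
    and "\<eta> > 0"
  shows "\<forall>t. \<eta> \<cdot>\<^sub>v (transpose_mat A *\<^sub>v (A *\<^sub>v sea_xt A y k \<eta> X0 t - y)) = oracle_u A y xs k \<eta> X0 t"
proof
  fix t
  note A = assms(4) and o = assms(5) and xs = assms(6)
  define X where "X = sea_X A y k \<eta> X0 t"
  have X: "X \<in> carrier_vec n" using sea_X_carrier[OF A assms(9)] X_def by simp
  define S where "S = sea_S k X"
  define x where "x = vec n (\<lambda>i. if i \<in> S then xs $ i else 0)"
  have xt: "sea_xt A y k \<eta> X0 t = x"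
    using sea_x_restrict[OF A o xs X] assms(8) by (simp add: sea_xt_def X_def x_def S_def)
  have x: "x \<in> carrier_vec n" by (simp add: x_def)
  have "transpose_mat A *\<^sub>v (A *\<^sub>v x - A *\<^sub>v xs) = transpose_mat A *\<^sub>v (A *\<^sub>v (x - xs))"
    by (simp only: mult_minus_distrib_mat_vec[OF A x xs])
  also have "\<dots> = (transpose_mat A * A) *\<^sub>v (x - xs)"
  proof -
    have At: "transpose_mat A \<in> carrier_mat n m" using A by simp
    have d: "x - xs \<in> carrier_vec n" using x xs by simp
    show ?thesis by (simp only: assoc_mult_mat_vec[OF At A d])
  qed
  also have "\<dots> = x - xs" using o x xs by simp
  finally have e: "transpose_mat A *\<^sub>v (A *\<^sub>v x - A *\<^sub>v xs) = x - xs" .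
  have e': "transpose_mat A *\<^sub>v (A *\<^sub>v x - y) = x - xs" using e by (simp only: assms(8))
  show "\<eta> \<cdot>\<^sub>v (transpose_mat A *\<^sub>v (A *\<^sub>v sea_xt A y k \<eta> X0 t - y)) = oracle_u A y xs k \<eta> X0 t"
    unfolding xt e'
  proof (rule eq_vecI)
    fix i assume "i < dim_vec (oracle_u A y xs k \<eta> X0 t)"
    hence i: "i < n" using xs by (simp add: oracle_u_def)
    show "(\<eta> \<cdot>\<^sub>v (x - xs)) $ i = oracle_u A y xs k \<eta> X0 t $ i"
      using i xs x
      by (auto simp: oracle_u_def x_def support_vec_def sea_St_def S_def X_def assms(8))
  qed (use xs x in \<open>simp add: oracle_u_def\<close>)
qed

end
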